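(* Under the setting in the context (in particular $\hat\tau$ permutation-invariant), for every subset $\mathcal S_u\subseteq\mathcal U$, every $j\in\mathcal S_u$ and every $k\in\mathcal C$, $$\mathbb E\Big[\frac{\mathbf 1\{R_j>\mathcal Q_j,\ T_k\le\hat\tau,\ \hat{\mathcal S}_u=\mathcal S_u\}}{\sum_{i\in\mathcal C\cup\{j\}}\mathbf 1\{T_i\le\hat\tau\}}\Big]=\mathbb E\Big[\frac{\mathbf 1\{R_k>\mathcal Q_j,\ T_k\le\hat\tau,\ \hat{\mathcal S}_u=\mathcal S_u\}}{\sum_{i\in\mathcal C\cup\{j\}}\mathbf 1\{T_i\le\hat\tau\}}\Big],$$ where $\mathcal Q_j$ is the $\lceil(1-\alpha)(|\hat{\mathcal S}_c|+1)\rceil$-th smallest value of $\{R_i: i\in\hat{\mathcal S}_c\cup\{j\}\}$.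
   Context: Setting: $\hat\mu,g:\mathbb R^d\to\mathbb R$ fixed deterministic measurable functions; calibration indices $\mathcal C$ ($|\mathcal C|=n$) and disjoint test indices $\mathcal U$ ($|\mathcal U|=m$); $(X_i,Y_i)$, $i\in\mathcal C\cup\mathcal U$, i.i.d.; $T_i=g(X_i)$, $R_i=|Y_i-\hat\mu(X_i)|$; $\alpha\in(0,1)$. The threshold is $\hat\tau=\tau(T_i:i\in\mathcal C\cup\mathcal U)$ for a deterministic measurable $\tau:\mathbb R^{n+m}\to\mathbb R$ invariant under permutations of its arguments; $\hat{\mathcal S}_u=\{i\in\mathcal U:T_i\le\hat\tau\}$ and $\hat{\mathcal S}_c=\{i\in\mathcal C:T_i\le\hat\tau\}$. On the event $\hat{\mathcal S}_u=\mathcal S_u\ni j$ the denominator is at least $1$. *)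

theory Defs
  imports "HOL-Probability.Probability"
begin

text \<open>A sample is a map \<open>\<omega>\<close> from indices to pairs \<open>(X_i, Y_i)\<close>.\<close>

definition score_T :: "('a \<Rightarrow> real) \<Rightarrow> (nat \<Rightarrow> 'a \<times> real) \<Rightarrow> nat \<Rightarrow> real" where
  "score_T g \<omega> i = g (fst (\<omega> i))"

definition resid_R :: "('a \<Rightarrow> real) \<Rightarrow> (nat \<Rightarrow> 'a \<times> real) \<Rightarrow> nat \<Rightarrow> real" where
  "resid_R mu \<omega> i = \<bar>snd (\<omega> i) - mu (fst (\<omega> i))\<bar>"

definition tau_hat :: "((nat \<Rightarrow> real) \<Rightarrow> real) \<Rightarrow> ('a \<Rightarrow> real) \<Rightarrow> nat set \<Rightarrow> nat set
    \<Rightarrow> (nat \<Rightarrow> 'a \<times> real) \<Rightarrow> real" where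
  "tau_hat tau g C U \<omega> = tau (\<lambda>i\<in>C \<union> U. score_T g \<omega> i)"

definition sel_set :: "((nat \<Rightarrow> real) \<Rightarrow> real) \<Rightarrow> ('a \<Rightarrow> real) \<Rightarrow> nat set \<Rightarrow> nat set
    \<Rightarrow> nat set \<Rightarrow> (nat \<Rightarrow> 'a \<times> real) \<Rightarrow> nat set" where
  "sel_set tau g C U A \<omega> = {i \<in> A. score_T g \<omega> i \<le> tau_hat tau g C U \<omega>}"

text \<open>k-th smallest element (1-based) of a finite multiset of reals.\<close>
definition kth_smallest :: "nat \<Rightarrow> real multiset \<Rightarrow> real" where
  "kth_smallest k M = sorted_list_of_multiset M ! (k - 1)"

definition Q_j :: "real \<Rightarrow> ((nat \<Rightarrow> real) \<Rightarrow> real) \<Rightarrow> ('a \<Rightarrow> real) \<Rightarrow> ('a \<Rightarrow> real)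
    \<Rightarrow> nat set \<Rightarrow> nat set \<Rightarrow> nat \<Rightarrow> (nat \<Rightarrow> 'a \<times> real) \<Rightarrow> real" where
  "Q_j \<alpha> tau g mu C U j \<omega> =
     (let Sc = sel_set tau g C U C \<omega> in
      kth_smallest (nat \<lceil>(1 - \<alpha>) * (real (card Sc) + 1)\<rceil>)
        (image_mset (resid_R mu \<omega>) (mset_set (Sc \<union> {j}))))"

end

theory Submission
  imports Defs
begin

lemma hbi_pres:
  fixes f :: "'x \<Rightarrow> 'b::{real_normed_vector, second_countable_topology}"
  assumes T: "T \<in> M \<rightarrow>\<^sub>M M" and D: "distr M M T = M"
    and inv: "\<And>y. y \<in> space M \<Longrightarrow> T (T y) = y"
    and H: "has_bochner_integral M f x"
  shows "has_bochner_integral M (\<lambda>y. f (T y)) x"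
  using H
proof cases
  case (1 s)
  have Tsp: "T y \<in> space M" if "y \<in> space M" for y using T that by (rule measurable_space)
  have img: "T ` space M = space M"
  proof
    show "T ` space M \<subseteq> space M" using Tsp by auto
    show "space M \<subseteq> T ` space M"
    proof
      fix y assume "y \<in> space M" then show "y \<in> T ` space M" using inv[of y] Tsp by (metis image_eqI)
    qed
  qed
  have sf: "simple_function M (s i)" for i using 1(2)[of i] by (cases) auto
  have fin: "emeasure M {y\<in>space M. s i y \<noteq> 0} \<noteq> \<infinity>" for i using 1(2)[of i] by (cases) auto
  have pre: "{y\<in>space M. P (s i (T y))} = T -` {y\<in>space M. P (s i y)} \<inter> space M" for P i
    using Tsp by auto
  have setsP: "{y\<in>space M. P (s i y)} \<in> sets M" for P i
  proof -
    have "{y\<in>space M. P (s i y)} = s i -` {v. P v} \<inter> space M" by auto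
    also have "\<dots> \<in> sets M" by (rule simple_functionD(2)[OF sf])
    finally show ?thesis .
  qed
  have em: "emeasure M {y\<in>space M. P (s i (T y))} = emeasure M {y\<in>space M. P (s i y)}" for P i
  proof -
    have "emeasure M {y\<in>space M. P (s i (T y))} = emeasure (distr M M T) {y\<in>space M. P (s i y)}"
      unfolding pre by (rule emeasure_distr[OF T setsP, symmetric])
    then show ?thesis unfolding D .
  qed
  have me: "measure M {y\<in>space M. P (s i (T y))} = measure M {y\<in>space M. P (s i y)}" for P i
    using em[of P i] by (simp add: measure_def)
  show ?thesis
  proof (rule has_bochner_integral.intros[where s="\<lambda>i y. s i (T y)"])
    show "(\<lambda>y. f (T y)) \<in> borel_measurable M" using 1(1) T by measurable
    show "Bochner_Integration.simple_bochner_integrable M (\<lambda>y. s i (T y))" for i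
    proof -
      have a: "simple_function M (\<lambda>y. s i (T y))" by (rule simple_function_comp[OF T sf])
      have b: "emeasure M {y \<in> space M. s i (T y) \<noteq> 0} \<noteq> \<infinity>" using em[of "\<lambda>v. v \<noteq> 0" i] fin[of i] by simp
      show ?thesis using a b by (simp add: simple_bochner_integrable.simps)
    qed
    have "(\<integral>\<^sup>+y. norm (f (T y) - s i (T y)) \<partial>M) = (\<integral>\<^sup>+y. norm (f y - s i y) \<partial>M)" for i
    proof -
      have m: "(\<lambda>y. ennreal (norm (f y - s i y))) \<in> borel_measurable M"
        using 1(1) borel_measurable_simple_function[OF sf] by measurable
      have "(\<integral>\<^sup>+y. norm (f (T y) - s i (T y)) \<partial>M) = (\<integral>\<^sup>+y. norm (f y - s i y) \<partial>(distr M M T))"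
      proof -
        have m': "(\<lambda>y. ennreal (norm (f y - s i y))) \<in> borel_measurable (distr M M T)" using m D by simp
        show ?thesis by (rule nn_integral_distr[OF T m', symmetric])
      qed
      then show ?thesis unfolding D .
    qed
    then show "(\<lambda>i. \<integral>\<^sup>+y. norm (f (T y) - s i (T y)) \<partial>M) \<longlonglongrightarrow> 0" using 1(3) by simp
    have "Bochner_Integration.simple_bochner_integral M (\<lambda>y. s i (T y)) = Bochner_Integration.simple_bochner_integral M (s i)" for i
    proof -
      have "(\<lambda>y. s i (T y)) ` space M = s i ` space M" using img by (metis image_image)
      then show ?thesis unfolding simple_bochner_integral_def
        using me[of "\<lambda>v. v = _" i] by simp
    qed
    then show "(\<lambda>i. Bochner_Integration.simple_bochner_integral M (\<lambda>y. s i (T y))) \<longlonglongrightarrow> x" using 1(4) by simp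
  qed
qed

lemma integral_pres:
  fixes f1 f2 :: "'x \<Rightarrow> 'b::{real_normed_vector, second_countable_topology}"
  assumes T: "T \<in> M \<rightarrow>\<^sub>M M" and D: "distr M M T = M"
    and inv: "\<And>y. y \<in> space M \<Longrightarrow> T (T y) = y"
    and e1: "\<And>y. y \<in> space M \<Longrightarrow> f1 (T y) = f2 y"
    and e2: "\<And>y. y \<in> space M \<Longrightarrow> f2 (T y) = f1 y"
  shows "integral\<^sup>L M f1 = integral\<^sup>L M f2"
proof -
  have a: "has_bochner_integral M f2 x" if "has_bochner_integral M f1 x" for x
  proof -
    have "has_bochner_integral M (\<lambda>y. f1 (T y)) x \<longleftrightarrow> has_bochner_integral M f2 x"
      by (rule has_bochner_integral_cong) (auto simp: e1)
    then show ?thesis using hbi_pres[OF T D inv that] by blast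
  qed
  have b: "has_bochner_integral M f1 x" if "has_bochner_integral M f2 x" for x
  proof -
    have "has_bochner_integral M (\<lambda>y. f2 (T y)) x \<longleftrightarrow> has_bochner_integral M f1 x"
      by (rule has_bochner_integral_cong) (auto simp: e2)
    then show ?thesis using hbi_pres[OF T D inv that] by blast
  qed
  show ?thesis
  proof (cases "integrable M f1")
    case True
    then have "has_bochner_integral M f1 (integral\<^sup>L M f1)" by (rule has_bochner_integral_integrable)
    then show ?thesis using a has_bochner_integral_integral_eq by metis
  next
    case False
    then have "\<not> integrable M f2" using b integrable.simps by metis
    then show ?thesis using False by (simp add: not_integrable_integral_eq)
  qed
qed

theorem lemma9:
  fixes P :: "('a::euclidean_space \<times> real) measure"
    and mu g :: "'a \<Rightarrow> real"
    and tau :: "(nat \<Rightarrow> real) \<Rightarrow> real"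
    and C U Su :: "nat set" and j k :: nat and \<alpha> :: real
  assumes P: "prob_space P" "sets P = sets borel"
    and mu_meas: "mu \<in> borel_measurable borel"
    and g_meas: "g \<in> borel_measurable borel"
    and fin: "finite C" "finite U" and disj: "C \<inter> U = {}"
    and alpha: "0 < \<alpha>" "\<alpha> < 1"
    and tau_meas: "tau \<in> borel_measurable (PiM (C \<union> U) (\<lambda>_. borel))"
    and tau_perm: "\<And>\<pi> t. \<pi> permutes (C \<union> U) \<Longrightarrow>
                      tau (\<lambda>i\<in>C \<union> U. t (\<pi> i)) = tau (\<lambda>i\<in>C \<union> U. t i)"
    and Su: "Su \<subseteq> U" and j: "j \<in> Su" and k: "k \<in> C"
  shows "(\<integral>\<omega>. indicator {\<omega>. resid_R mu \<omega> j > Q_j \<alpha> tau g mu C U j \<omega>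
                         \<and> score_T g \<omega> k \<le> tau_hat tau g C U \<omega>
                         \<and> sel_set tau g C U U \<omega> = Su} \<omega>
            / (\<Sum>i\<in>C \<union> {j}. if score_T g \<omega> i \<le> tau_hat tau g C U \<omega> then 1 else 0)
          \<partial>(PiM (C \<union> U) (\<lambda>_. P)))
       = (\<integral>\<omega>. indicator {\<omega>. resid_R mu \<omega> k > Q_j \<alpha> tau g mu C U j \<omega>
                         \<and> score_T g \<omega> k \<le> tau_hat tau g C U \<omega>
                         \<and> sel_set tau g C U U \<omega> = Su} \<omega>
            / (\<Sum>i\<in>C \<union> {j}. if score_T g \<omega> i \<le> tau_hat tau g C U \<omega> then 1 else 0)
          \<partial>(PiM (C \<union> U) (\<lambda>_. P)))"
proof -
  define I where "I = C \<union> U"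
  define \<pi> where "\<pi> = Transposition.transpose j k"
  define \<phi> :: "(nat \<Rightarrow> 'a \<times> real) \<Rightarrow> (nat \<Rightarrow> 'a \<times> real)" where "\<phi> = (\<lambda>\<omega>. \<lambda>n\<in>I. \<omega> (\<pi> n))"
  define M where "M = PiM (C \<union> U) (\<lambda>_. P)"
  have jU: "j \<in> U" using Su j by auto
  have jk: "j \<noteq> k" using jU k disj by auto
  have jI: "j \<in> I" and kI: "k \<in> I" using jU k by (auto simp: I_def)
  have piI: "\<pi> permutes I" unfolding \<pi>_def by (rule permutes_swap_id[OF jI kI])
  have piCj: "\<pi> permutes (C \<union> {j})" unfolding \<pi>_def by (rule permutes_swap_id) (use k in auto)
  have pij: "\<pi> j = k" and pik: "\<pi> k = j" by (auto simp: \<pi>_def)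
  have pio: "\<pi> i = i" if "i \<noteq> j" "i \<noteq> k" for i using that by (auto simp: \<pi>_def)
  have piinv: "\<pi> (\<pi> i) = i" for i by (auto simp: \<pi>_def Transposition.transpose_def)
  have TT: "score_T g (\<phi> \<omega>) i = score_T g \<omega> (\<pi> i)" if "i \<in> I" for \<omega> i
    using that by (simp add: score_T_def \<phi>_def)
  have RR: "resid_R mu (\<phi> \<omega>) i = resid_R mu \<omega> (\<pi> i)" if "i \<in> I" for \<omega> i
    using that by (simp add: resid_R_def \<phi>_def)
  have tauT: "tau_hat tau g C U (\<phi> \<omega>) = tau_hat tau g C U \<omega>" for \<omega>
  proof -
    have "(\<lambda>i\<in>C \<union> U. score_T g (\<phi> \<omega>) i) = (\<lambda>i\<in>C \<union> U. (\<lambda>i. score_T g \<omega> i) (\<pi> i))"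
      using TT by (auto simp: I_def)
    then show ?thesis unfolding tau_hat_def using tau_perm[OF piI[unfolded I_def]] by simp
  qed
  define ev where "ev = (\<lambda>\<omega> r. resid_R mu \<omega> r > Q_j \<alpha> tau g mu C U j \<omega>
                         \<and> score_T g \<omega> k \<le> tau_hat tau g C U \<omega>
                         \<and> sel_set tau g C U U \<omega> = Su)"
  define den where "den = (\<lambda>\<omega>. (\<Sum>i\<in>C \<union> {j}. if score_T g \<omega> i \<le> tau_hat tau g C U \<omega> then 1 else 0::'b))"
  define f1 where "f1 = (\<lambda>\<omega>. indicator {\<omega>. ev \<omega> j} \<omega> / den \<omega>)"
  define f2 where "f2 = (\<lambda>\<omega>. indicator {\<omega>. ev \<omega> k} \<omega> / den \<omega>)"
  have den: "den (\<phi> \<omega>) = den \<omega>" for \<omega>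
  proof -
    have "den (\<phi> \<omega>) = (\<Sum>i\<in>C \<union> {j}. if score_T g \<omega> (\<pi> i) \<le> tau_hat tau g C U \<omega> then 1 else 0::'b)"
      unfolding den_def tauT by (intro sum.cong refl) (use TT jI in \<open>auto simp: I_def\<close>)
    also have "\<dots> = den \<omega>" unfolding den_def
      by (subst sum.permute[OF piCj]) (simp add: comp_def)
    finally show ?thesis .
  qed
  have ev: "ev (\<phi> \<omega>) j \<longleftrightarrow> ev \<omega> k" for \<omega>
  proof -
    define t where "t = tau_hat tau g C U \<omega>"
    have selU: "sel_set tau g C U U (\<phi> \<omega>) = {i \<in> U. score_T g \<omega> (\<pi> i) \<le> t}"
      unfolding sel_set_def tauT t_def using TT by (auto simp: I_def)
    have pU: "\<pi> i = i" if "i \<in> U" "i \<noteq> j" for i using that k disj pio by auto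
    have selU2: "sel_set tau g C U U \<omega> = {i \<in> U. score_T g \<omega> i \<le> t}"
      unfolding sel_set_def t_def by simp
    have A0: "(score_T g \<omega> j \<le> t \<and> {i \<in> U. score_T g \<omega> (\<pi> i) \<le> t} = Su) \<longleftrightarrow>
             (score_T g \<omega> k \<le> t \<and> {i \<in> U. score_T g \<omega> i \<le> t} = Su)"
    proof
      assume H: "score_T g \<omega> j \<le> t \<and> {i \<in> U. score_T g \<omega> (\<pi> i) \<le> t} = Su"
      then have kk: "score_T g \<omega> k \<le> t" using j jU pij by auto
      have jj: "score_T g \<omega> j \<le> t" using H by simp
      have "{i \<in> U. score_T g \<omega> i \<le> t} = {i \<in> U. score_T g \<omega> (\<pi> i) \<le> t}"
        proof (intro Collect_cong conj_cong refl)
          fix i assume "i \<in> U"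
          then show "score_T g \<omega> i \<le> t \<longleftrightarrow> score_T g \<omega> (\<pi> i) \<le> t"
            using pU[of i] kk jj pij by (cases "i = j") auto
        qed
      then show "score_T g \<omega> k \<le> t \<and> {i \<in> U. score_T g \<omega> i \<le> t} = Su" using H kk by simp
    next
      assume H: "score_T g \<omega> k \<le> t \<and> {i \<in> U. score_T g \<omega> i \<le> t} = Su"
      then have jj: "score_T g \<omega> j \<le> t" using j jU by auto
      have kk: "score_T g \<omega> k \<le> t" using H by simp
      have "{i \<in> U. score_T g \<omega> i \<le> t} = {i \<in> U. score_T g \<omega> (\<pi> i) \<le> t}"
        proof (intro Collect_cong conj_cong refl)
          fix i assume "i \<in> U"
          then show "score_T g \<omega> i \<le> t \<longleftrightarrow> score_T g \<omega> (\<pi> i) \<le> t"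
            using pU[of i] kk jj pij by (cases "i = j") auto
        qed
      then show "score_T g \<omega> j \<le> t \<and> {i \<in> U. score_T g \<omega> (\<pi> i) \<le> t} = Su" using H jj by simp
    qed
    have A: "(score_T g \<omega> j \<le> t \<and> sel_set tau g C U U (\<phi> \<omega>) = Su) \<longleftrightarrow>
             (score_T g \<omega> k \<le> t \<and> sel_set tau g C U U \<omega> = Su)"
      using A0 unfolding selU selU2 .
    have Q: "Q_j \<alpha> tau g mu C U j (\<phi> \<omega>) = Q_j \<alpha> tau g mu C U j \<omega>"
      if jj: "score_T g \<omega> j \<le> t" and kk: "score_T g \<omega> k \<le> t"
    proof -
      have Sc: "sel_set tau g C U C (\<phi> \<omega>) = sel_set tau g C U C \<omega>"
        unfolding sel_set_def tauT t_def[symmetric]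
      proof (intro Collect_cong conj_cong refl)
        fix i assume "i \<in> C"
        then show "score_T g (\<phi> \<omega>) i \<le> t \<longleftrightarrow> score_T g \<omega> i \<le> t"
        proof -
          have ij: "i \<noteq> j" using \<open>i \<in> C\<close> jU disj by auto
          have iI: "i \<in> I" using \<open>i \<in> C\<close> by (simp add: I_def)
          show ?thesis
          proof (cases "i = k")
            case True then show ?thesis using TT[OF iI] jj kk pik by simp
          next
            case False then show ?thesis using TT[OF iI] pio[OF ij False] by simp
          qed
        qed
      qed
      define S where "S = sel_set tau g C U C \<omega> \<union> {j}"
      have SI: "S \<subseteq> I" using jI by (auto simp: S_def sel_set_def I_def)
      have kS: "k \<in> S" using k kk by (auto simp: S_def sel_set_def t_def)
      have jS: "j \<in> S" by (auto simp: S_def)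
      have piS: "\<pi> permutes S" unfolding \<pi>_def by (rule permutes_swap_id[OF jS kS])
      have fin: "finite S" using fin by (auto simp: S_def sel_set_def)
      have "image_mset (resid_R mu (\<phi> \<omega>)) (mset_set S) = image_mset (resid_R mu \<omega> \<circ> \<pi>) (mset_set S)"
        by (intro image_mset_cong) (use RR SI fin in auto)
      also have "\<dots> = image_mset (resid_R mu \<omega>) (image_mset \<pi> (mset_set S))"
        by (simp add: multiset.map_comp)
      also have "image_mset \<pi> (mset_set S) = mset_set S"
        using image_mset_mset_set[of \<pi> S] permutes_inj_on[OF piS] permutes_image[OF piS] by simp
      finally show ?thesis unfolding Q_j_def Let_def Sc S_def by simp
    qed
    have e1: "ev (\<phi> \<omega>) j \<longleftrightarrow> resid_R mu \<omega> k > Q_j \<alpha> tau g mu C U j (\<phi> \<omega>)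
         \<and> (score_T g \<omega> j \<le> t \<and> sel_set tau g C U U (\<phi> \<omega>) = Su)"
      unfolding ev_def tauT t_def[symmetric] RR[OF jI] TT[OF kI] pij pik by simp
    have e2: "ev \<omega> k \<longleftrightarrow> resid_R mu \<omega> k > Q_j \<alpha> tau g mu C U j \<omega>
         \<and> (score_T g \<omega> k \<le> t \<and> sel_set tau g C U U \<omega> = Su)"
      unfolding ev_def t_def by simp
    show ?thesis unfolding e1 e2 using A Q by metis
  qed
  have f12: "f1 (\<phi> \<omega>) = f2 \<omega>" for \<omega>
    unfolding f1_def f2_def den using ev by (simp add: indicator_def)
  have piIm: "\<pi> n \<in> C \<union> U" if "n \<in> C \<union> U" for n
    using permutes_in_image[OF piI, of n] that by (simp add: I_def)
  have meas_phi: "\<phi> \<in> M \<rightarrow>\<^sub>M M"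
    unfolding \<phi>_def M_def I_def
    by (rule measurable_restrict, rule measurable_component_singleton)
       (use piIm in auto)
  have sp: "\<phi> (\<phi> \<omega>) = \<omega>" if "\<omega> \<in> space M" for \<omega>
  proof
    fix n show "\<phi> (\<phi> \<omega>) n = \<omega> n"
      using that piinv permutes_in_image[OF piI] by (auto simp: \<phi>_def M_def space_PiM PiE_def extensional_def I_def)
  qed
  have f21: "f2 (\<phi> \<omega>) = f1 \<omega>" if "\<omega> \<in> space M" for \<omega>
    using f12[of "\<phi> \<omega>"] sp[OF that] by simp
  have distr: "distr M M \<phi> = M"
    using distr_PiM_reindex[of "C \<union> U" "\<lambda>_. P" \<pi> "C \<union> U"] P(1) piI
    unfolding M_def \<phi>_def I_def using piIm by (auto simp: permutes_inj_on)
  have "integral\<^sup>L M f1 = integral\<^sup>L M f2"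
    by (rule integral_pres[where T=\<phi>, OF meas_phi distr]) (simp_all add: sp f12 f21)
  then show ?thesis unfolding M_def f1_def f2_def ev_def den_def by simp
qed

end
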